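(* For every positive integer $n$ there exists a word of length $n$ over an alphabet of size $O(\log n)$ that has at least $2^{\lfloor (n+1)/16\rfloor}$ different shortest s-covers.
   Context: For words $C,S$, $C$ is an \emph{s-cover} of $S$ if for every position $i$ of $S$ there exist indices $j_0<\dots<j_{|C|-1}$ with $S[j_t]=C[t]$ for all $t$ and $i\in\{j_0,\dots,j_{|C|-1}\}$. A shortest s-cover of $S$ is an s-cover of $S$ of minimum length. *)

theory Defs
  imports Main "HOL-Library.Landau_Symbols"
begin

definition s_cover :: "'a list \<Rightarrow> 'a list \<Rightarrow> bool" where
  "s_cover C S \<longleftrightarrow>
     (\<forall>i < length S. \<exists>j :: nat \<Rightarrow> nat.
        strict_mono_on {..<length C} j \<and>
        (\<forall>t < length C. j t < length S \<and> S ! (j t) = C ! t) \<and>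
        (\<exists>t < length C. j t = i))"

definition shortest_s_cover :: "'a list \<Rightarrow> 'a list \<Rightarrow> bool" where
  "shortest_s_cover C S \<longleftrightarrow> s_cover C S \<and> (\<forall>D. s_cover D S \<longrightarrow> length C \<le> length D)"

end

theory Submission
  imports Defs "HOL-Library.Sublist"
begin


definition emb :: "'a list \<Rightarrow> 'a list \<Rightarrow> (nat \<Rightarrow> nat) \<Rightarrow> bool" where
"emb C S j \<longleftrightarrow> strict_mono_on {..<length C} j \<and> (\<forall>t<length C. j t < length S \<and> S ! (j t) = C ! t)"

lemma emb_imp_subseq: "emb C S j \<Longrightarrow> subseq C S"
proof (induction C arbitrary: S j)
  case Nil
  then show ?case by simp
next
  case (Cons c C)
  let ?k = "j 0"
  have k: "?k < length S" "S ! ?k = c" using Cons.prems by (auto simp: emb_def)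
  have sm: "strict_mono_on {..<length (c#C)} j" using Cons.prems by (auto simp: emb_def)
  have gt: "j (Suc t) > ?k" if "t < length C" for t
    using sm that by (auto simp: strict_mono_on_def)
  have "emb C (drop (Suc ?k) S) (\<lambda>t. j (Suc t) - Suc ?k)"
    unfolding emb_def
  proof (intro conjI allI impI)
    show "strict_mono_on {..<length C} (\<lambda>t. j (Suc t) - Suc (j 0))"
    proof (rule strict_mono_onI)
      fix r s assume "r \<in> {..<length C}" "s \<in> {..<length C}" "r < s"
      then have "j (Suc r) < j (Suc s)" using sm by (intro strict_mono_onD[OF sm]) auto
      moreover have "j (Suc r) > ?k" using gt \<open>r \<in> {..<length C}\<close> by auto
      ultimately show "j (Suc r) - Suc (j 0) < j (Suc s) - Suc (j 0)" by arith
    qed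
  next
    fix t assume t: "t < length C"
    have "j (Suc t) < length S" "S ! j (Suc t) = C ! t" using Cons.prems t by (auto simp: emb_def)
    moreover have "j (Suc t) > ?k" using gt t by auto
    ultimately show "j (Suc t) - Suc (j 0) < length (drop (Suc (j 0)) S)"
      "drop (Suc (j 0)) S ! (j (Suc t) - Suc (j 0)) = C ! t" by auto
  qed
  then have "subseq C (drop (Suc ?k) S)" by (rule Cons.IH)
  then have "subseq (c # C) (S ! ?k # drop (Suc ?k) S)" using k by simp
  then have "subseq (c # C) (take ?k S @ S ! ?k # drop (Suc ?k) S)" by (rule list_emb_append2)
  then show ?case using id_take_nth_drop[OF k(1)] by simp
qed

lemma subseq_imp_emb: "subseq C S \<Longrightarrow> \<exists>j. emb C S j"
proof (induction rule: list_emb.induct)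
  case (list_emb_Nil ys)
  then show ?case by (auto simp: emb_def)
next
  case (list_emb_Cons xs ys y)
  then obtain j where j: "emb xs ys j" by blast
  have "emb xs (y # ys) (\<lambda>t. Suc (j t))"
    using j by (auto simp: emb_def strict_mono_on_def)
  then show ?case by blast
next
  case (list_emb_Cons2 x y xs ys)
  then obtain j where j: "emb xs ys j" by blast
  let ?j = "\<lambda>t. case t of 0 \<Rightarrow> 0 | Suc t \<Rightarrow> Suc (j t)"
  have "emb (x # xs) (y # ys) ?j"
    using j list_emb_Cons2.hyps(1) unfolding emb_def strict_mono_on_def
    by (auto split: nat.splits simp: less_Suc_eq_0_disj)
  then show ?case by blast
qed

lemma emb_iff_subseq: "(\<exists>j. emb C S j) \<longleftrightarrow> subseq C S"
  using emb_imp_subseq subseq_imp_emb by blast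

definition chk :: "'a list \<Rightarrow> 'a list \<Rightarrow> bool" where
"chk C S \<longleftrightarrow> (\<forall>i<length S. \<exists>t<length C. C!t = S!i \<and> subseq (take t C) (take i S) \<and> subseq (drop (Suc t) C) (drop (Suc i) S))"

lemma s_cover_emb: "s_cover C S \<longleftrightarrow> (\<forall>i<length S. \<exists>j. emb C S j \<and> (\<exists>t<length C. j t = i))"
  unfolding s_cover_def emb_def by blast

lemma s_cover_chk: "s_cover C S \<longleftrightarrow> chk C S"
proof
  assume H: "s_cover C S"
  show "chk C S" unfolding chk_def
  proof (intro allI impI)
    fix i assume i: "i < length S"
    then obtain j t where j: "emb C S j" and t: "t < length C" "j t = i"
      using H by (auto simp: s_cover_emb)
    have sm: "strict_mono_on {..<length C} j" and jv: "\<forall>t<length C. j t < length S \<and> S ! (j t) = C ! t"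
      using j by (auto simp: emb_def)
    have e1: "emb (take t C) (take i S) j"
      unfolding emb_def
    proof (intro conjI allI impI)
      show "strict_mono_on {..<length (take t C)} j"
        using sm by (auto simp: strict_mono_on_def)
    next
      fix u assume u: "u < length (take t C)"
      then have "j u < j t" using sm t by (auto simp: strict_mono_on_def)
      then show "j u < length (take i S)" "take i S ! j u = take t C ! u"
        using jv u t i by auto
    qed
    have e2: "emb (drop (Suc t) C) (drop (Suc i) S) (\<lambda>u. j (Suc t + u) - Suc i)"
      unfolding emb_def
    proof (intro conjI allI impI)
      show "strict_mono_on {..<length (drop (Suc t) C)} (\<lambda>u. j (Suc t + u) - Suc i)"
      proof (rule strict_mono_onI)
        fix r s assume rs: "r \<in> {..<length (drop (Suc t) C)}" "s \<in> {..<length (drop (Suc t) C)}" "r < s"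
        have "Suc t + r < length C" "Suc t + s < length C" using rs by auto
        then have "j t < j (Suc t + r)" "j (Suc t + r) < j (Suc t + s)"
          using rs t by (auto intro!: strict_mono_onD[OF sm])
        then show "j (Suc t + r) - Suc i < j (Suc t + s) - Suc i" using t by arith
      qed
    next
      fix u assume u: "u < length (drop (Suc t) C)"
      then have "j t < j (Suc t + u)" using sm t by (auto simp: strict_mono_on_def)
      moreover have "j (Suc t + u) < length S" "S ! j (Suc t + u) = C ! (Suc t + u)" using jv u by auto
      ultimately show "j (Suc t + u) - Suc i < length (drop (Suc i) S)"
        "drop (Suc i) S ! (j (Suc t + u) - Suc i) = drop (Suc t) C ! u"
        using t u by auto
    qed
    have "C ! t = S ! i" using jv t by auto
    then show "\<exists>t<length C. C ! t = S ! i \<and> subseq (take t C) (take i S) \<and> subseq (drop (Suc t) C) (drop (Suc i) S)"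
      using t e1 e2 emb_imp_subseq by blast
  qed
next
  assume H: "chk C S"
  show "s_cover C S" unfolding s_cover_emb
  proof (intro allI impI)
    fix i assume i: "i < length S"
    then obtain t where t: "t < length C" "C!t = S!i" and s1: "subseq (take t C) (take i S)"
      and s2: "subseq (drop (Suc t) C) (drop (Suc i) S)" using H by (auto simp: chk_def)
    obtain j1 where j1: "emb (take t C) (take i S) j1" using s1 subseq_imp_emb by blast
    obtain j2 where j2: "emb (drop (Suc t) C) (drop (Suc i) S) j2" using s2 subseq_imp_emb by blast
    define j where "j u = (if u < t then j1 u else if u = t then i else Suc i + j2 (u - Suc t))" for u
    have j1v: "j1 u < i \<and> S ! j1 u = C ! u" if "u < t" for u
      using j1 that t i by (auto simp: emb_def)
    have j2v: "Suc i + j2 (u - Suc t) < length S \<and> S ! (Suc i + j2 (u - Suc t)) = C ! u" if "t < u" "u < length C" for u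
    proof -
      have "u - Suc t < length (drop (Suc t) C)" using that by auto
      then have "j2 (u - Suc t) < length (drop (Suc i) S) \<and> drop (Suc i) S ! j2 (u - Suc t) = drop (Suc t) C ! (u - Suc t)"
        using j2 by (auto simp: emb_def)
      then show ?thesis using that i by auto
    qed
    have sm1: "j1 r < j1 s" if "r < s" "s < t" for r s
      using j1 that t unfolding emb_def strict_mono_on_def by auto
    have sm2: "j2 (r - Suc t) < j2 (s - Suc t)" if "t < r" "r < s" "s < length C" for r s
    proof -
      have "strict_mono_on {..<length (drop (Suc t) C)} j2" using j2 by (simp add: emb_def)
      then show ?thesis by (rule strict_mono_onD) (use that in auto)
    qed
    have "emb C S j" unfolding emb_def
    proof (intro conjI allI impI)
      show "strict_mono_on {..<length C} j" proof (rule strict_mono_onI)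
        fix r s assume rs: "r \<in> {..<length C}" "s \<in> {..<length C}" "r < s"
        show "j r < j s"
        proof (cases "s < t")
          case True then show ?thesis using sm1 rs by (auto simp: j_def)
        next
          case False
          show ?thesis
          proof (cases "s = t")
            case True then show ?thesis using rs j1v by (auto simp: j_def)
          next
            case False
            then have "s > t" using \<open>\<not> s < t\<close> by auto
            then show ?thesis using rs sm2 j1v by (auto simp: j_def dest: j1v)
          qed
        qed
      qed
    next
      fix u assume u: "u < length C"
      show "j u < length S" "S ! j u = C ! u"
        using j1v[of u] j2v[of u] u t i by (auto simp: j_def)
    qed
    moreover have "j t = i" by (simp add: j_def)
    ultimately show "\<exists>j. emb C S j \<and> (\<exists>t<length C. j t = i)" using t by blast
  qed
qed



definition cov :: "'a list \<Rightarrow> 'a list \<Rightarrow> bool" where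
"cov C S \<longleftrightarrow> chk C S \<and> subseq C S"

definition scov :: "'a list \<Rightarrow> 'a list \<Rightarrow> bool" where
"scov C S \<longleftrightarrow> cov C S \<and> (\<forall>D. cov D S \<longrightarrow> length C \<le> length D)"

lemma chk_subseq: assumes "S \<noteq> []" "chk C S" shows "subseq C S"
proof -
  obtain t where t: "t < length C" "C!t = S!0" "subseq (take t C) (take 0 S)"
    "subseq (drop (Suc t) C) (drop (Suc 0) S)"
    using assms by (auto simp: chk_def)
  have "t = 0" using t(1,3) by (cases t) (auto simp: take_Suc_conv_app_nth)
  then have "C = C!0 # drop 1 C" "S = S!0 # drop 1 S" using t(1) assms(1)
    by (auto simp: Cons_nth_drop_Suc)
  then show ?thesis using t \<open>t = 0\<close> by (metis One_nat_def list_emb_Cons2)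
qed

lemma s_cover_cov: "S \<noteq> [] \<Longrightarrow> s_cover C S \<longleftrightarrow> cov C S"
  by (auto simp: s_cover_chk cov_def intro: chk_subseq)

lemma shortest_scov: "S \<noteq> [] \<Longrightarrow> shortest_s_cover C S \<longleftrightarrow> scov C S"
  by (simp add: shortest_s_cover_def scov_def s_cover_cov)

lemma subseq_set: "subseq A B \<Longrightarrow> set A \<subseteq> set B"
  by (induction rule: list_emb.induct) auto

lemma K: assumes "subseq (A @ x # B) (A' @ x # B')" "x \<notin> set A" "x \<notin> set A'" "x \<notin> set B'"
  shows "subseq A A' \<and> subseq B B'"
proof -
  obtain L1 L2 where L: "A @ x # B = L1 @ L2" "subseq L1 A'" "subseq L2 (x # B')"
    using assms(1) by (auto elim: subseq_appendE)
  have "x \<notin> set L1" using L(2) assms(3) subseq_set by blast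
  then obtain M where M: "A = L1 @ M" "L2 = M @ x # B"
    using L(1) by (auto simp: append_eq_append_conv2 append_eq_Cons_conv Cons_eq_append_conv)
  show ?thesis
  proof (cases M)
    case Nil
    then show ?thesis using M L subseq_Cons2' by auto
  next
    case (Cons m M')
    then have "m \<noteq> x" using M assms(2) by auto
    then have "subseq (m # M' @ x # B) B'" using L(3) M Cons subseq_Cons2_neq by fastforce
    then have "x \<in> set B'" using subseq_set by fastforce
    then show ?thesis using assms(4) by blast
  qed
qed

lemma cov_self: "cov S S"
  unfolding cov_def chk_def by auto

lemma cov_set: "cov C S \<Longrightarrow> set C \<subseteq> set S"
  unfolding cov_def using subseq_set by blast

lemma cov_split:
  assumes x: "x \<notin> set X" "x \<notin> set Y"
  shows "cov C (X @ x # Y) \<longleftrightarrow> (\<exists>C1 C2. C = C1 @ x # C2 \<and> cov C1 X \<and> cov C2 Y)"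
proof
  assume H: "cov C (X @ x # Y)"
  let ?S = "X @ x # Y"
  have ch: "\<exists>t<length C. C!t = ?S!i \<and> subseq (take t C) (take i ?S) \<and> subseq (drop (Suc t) C) (drop (Suc i) ?S)"
    if "i < length ?S" for i using H that by (auto simp: cov_def chk_def)
  obtain t0 where t0: "t0 < length C" "C!t0 = x" "subseq (take t0 C) X" "subseq (drop (Suc t0) C) Y"
    using ch[of "length X"] by auto
  define C1 where "C1 = take t0 C"
  define C2 where "C2 = drop (Suc t0) C"
  have C: "C = C1 @ x # C2" using t0 unfolding C1_def C2_def by (metis id_take_nth_drop)
  have lC1: "length C1 = t0" using t0 by (simp add: C1_def)
  have xC1: "x \<notin> set C1" using t0(3) x subseq_set C1_def by fastforce
  have xC2: "x \<notin> set C2" using t0(4) x subseq_set C2_def by fastforce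
  have "chk C1 X" unfolding chk_def
  proof (intro allI impI)
    fix i assume i: "i < length X"
    obtain t where t: "t < length C" "C!t = ?S!i" "subseq (take t C) (take i ?S)" "subseq (drop (Suc t) C) (drop (Suc i) ?S)"
      using ch[of i] i by auto
    have Si: "?S ! i = X ! i" using i by (simp add: nth_append)
    have "C ! t \<noteq> x" using t(2) Si i x by (metis nth_mem)
    then have "t \<noteq> t0" using t0 by auto
    moreover have "\<not> t > t0"
    proof
      assume "t > t0"
      then have "x \<in> set (take t C)" using t0 by (metis in_set_conv_nth length_take min_less_iff_conj nth_take t(1))
      then have "x \<in> set (take i X)" using t(3) i subseq_set by (fastforce simp: take_append)
      then show False using x by (meson in_set_takeD)
    qed
    ultimately have tt: "t < t0" by auto
    have "take t C = take t C1" using tt by (simp add: C1_def)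
    moreover have "drop (Suc t) C = drop (Suc t) C1 @ x # C2" using tt lC1 C by simp
    moreover have "drop (Suc i) ?S = drop (Suc i) X @ x # Y" using i by simp
    moreover have "take i ?S = take i X" using i by simp
    ultimately have q1: "subseq (take t C1) (take i X)" and q2: "subseq (drop (Suc t) C1 @ x # C2) (drop (Suc i) X @ x # Y)"
      using t by auto
    have q3: "x \<notin> set (drop (Suc t) C1)" using xC1 by (meson in_set_dropD)
    have q4: "x \<notin> set (drop (Suc i) X)" using x by (meson in_set_dropD)
    have "subseq (drop (Suc t) C1) (drop (Suc i) X)" using K[OF q2 q3 q4 x(2)] by simp
    moreover have "C1 ! t = X ! i" using t(2) Si tt by (simp add: C1_def)
    ultimately show "\<exists>t<length C1. C1 ! t = X ! i \<and> subseq (take t C1) (take i X) \<and> subseq (drop (Suc t) C1) (drop (Suc i) X)"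
      using q1 tt lC1 by auto
  qed
  moreover have "chk C2 Y" unfolding chk_def
  proof (intro allI impI)
    fix i assume i: "i < length Y"
    let ?i = "Suc (length X + i)"
    obtain t where t: "t < length C" "C!t = ?S!?i" "subseq (take t C) (take ?i ?S)" "subseq (drop (Suc t) C) (drop (Suc ?i) ?S)"
      using ch[of ?i] i by auto
    have Si: "?S ! ?i = Y ! i" using i by (simp add: nth_append)
    have "C ! t \<noteq> x" using t(2) Si i x by (metis nth_mem)
    then have "t \<noteq> t0" using t0 by auto
    moreover have "\<not> t < t0"
    proof
      assume "t < t0"
      then have "x \<in> set (drop (Suc t) C)" using t0 C lC1
        by (metis Cons_nth_drop_Suc Suc_lessI list.set_intros(1) set_drop_subset_set_drop subsetD Suc_leI)
      then have "x \<in> set (drop (Suc i) Y)" using t(4) i subseq_set by fastforce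
      then show False using x by (meson in_set_dropD)
    qed
    ultimately have tt: "t0 < t" by auto
    define u where "u = t - Suc t0"
    have tu: "t = Suc t0 + u" using tt u_def by auto
    have "take t C = C1 @ x # take u C2" using C lC1 tu by simp
    moreover have "drop (Suc t) C = drop (Suc u) C2" using C lC1 tu by simp
    moreover have "take ?i ?S = X @ x # take i Y" by simp
    moreover have "drop (Suc ?i) ?S = drop (Suc i) Y" by simp
    ultimately have q1: "subseq (C1 @ x # take u C2) (X @ x # take i Y)" and q2: "subseq (drop (Suc u) C2) (drop (Suc i) Y)"
      using t by auto
    have q3: "x \<notin> set (take i Y)" using x by (meson in_set_takeD)
    have "subseq (take u C2) (take i Y)" using K[OF q1 xC1 x(1) q3] by simp
    moreover have "u < length C2" using t(1) C lC1 tu by simp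
    moreover have "C2 ! u = Y ! i" using t(2) Si C lC1 tu by (simp add: nth_append)
    ultimately show "\<exists>t<length C2. C2 ! t = Y ! i \<and> subseq (take t C2) (take i Y) \<and> subseq (drop (Suc t) C2) (drop (Suc i) Y)"
      using q2 by auto
  qed
  moreover have "subseq C1 X" "subseq C2 Y" using t0 by (simp_all add: C1_def C2_def)
  ultimately show "\<exists>C1 C2. C = C1 @ x # C2 \<and> cov C1 X \<and> cov C2 Y"
    using C by (auto simp: cov_def)
next
  assume "\<exists>C1 C2. C = C1 @ x # C2 \<and> cov C1 X \<and> cov C2 Y"
  then obtain C1 C2 where C: "C = C1 @ x # C2" and c1: "cov C1 X" and c2: "cov C2 Y" by blast
  let ?S = "X @ x # Y"
  have s1: "subseq C1 X" and s2: "subseq C2 Y" using c1 c2 by (auto simp: cov_def)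
  have sub: "subseq C ?S" using C s1 s2 by (simp add: list_emb_append_mono)
  have "chk C ?S" unfolding chk_def
  proof (intro allI impI)
    fix i assume i: "i < length ?S"
    consider (a) "i < length X" | (b) "i = length X" | (c) "i > length X" by linarith
    then show "\<exists>t<length C. C ! t = ?S ! i \<and> subseq (take t C) (take i ?S) \<and> subseq (drop (Suc t) C) (drop (Suc i) ?S)"
    proof cases
      case a
      then obtain t where t: "t < length C1" "C1!t = X!i" "subseq (take t C1) (take i X)" "subseq (drop (Suc t) C1) (drop (Suc i) X)"
        using c1 by (auto simp: cov_def chk_def)
      have "subseq (drop (Suc t) C1 @ x # C2) (drop (Suc i) X @ x # Y)"
        using t(4) s2 by (simp add: list_emb_append_mono)
      then show ?thesis using t a C
        by (intro exI[of _ t]) (auto simp: nth_append)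
    next
      case b
      then show ?thesis using C s1 s2 by (intro exI[of _ "length C1"]) auto
    next
      case c
      define i' where "i' = i - Suc (length X)"
      have ii: "i = Suc (length X + i')" using c i'_def by auto
      have i'l: "i' < length Y" using i ii by simp
      then obtain t where t: "t < length C2" "C2!t = Y!i'" "subseq (take t C2) (take i' Y)" "subseq (drop (Suc t) C2) (drop (Suc i') Y)"
        using c2 by (auto simp: cov_def chk_def)
      have "subseq (C1 @ x # take t C2) (X @ x # take i' Y)"
        using t(3) s1 by (simp add: list_emb_append_mono)
      then show ?thesis using t ii C
        by (intro exI[of _ "Suc (length C1 + t)"]) (auto simp: nth_append)
    qed
  qed
  then show "cov C ?S" using sub by (simp add: cov_def)
qed



lemma scov_split:
  assumes x: "x \<notin> set X" "x \<notin> set Y"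
  shows "scov C (X @ x # Y) \<longleftrightarrow> (\<exists>C1 C2. C = C1 @ x # C2 \<and> scov C1 X \<and> scov C2 Y)"
proof
  assume H: "scov C (X @ x # Y)"
  then have "cov C (X @ x # Y)" by (simp add: scov_def)
  then obtain C1 C2 where C: "C = C1 @ x # C2" and c1: "cov C1 X" and c2: "cov C2 Y"
    unfolding cov_split[OF x] by blast
  have "length C1 \<le> length D1" if "cov D1 X" for D1
  proof -
    have "cov (D1 @ x # C2) (X @ x # Y)" unfolding cov_split[OF x] using that c2 by blast
    then have "length C \<le> length (D1 @ x # C2)" using H by (auto simp: scov_def)
    then show ?thesis using C by simp
  qed
  moreover have "length C2 \<le> length D2" if "cov D2 Y" for D2
  proof -
    have "cov (C1 @ x # D2) (X @ x # Y)" unfolding cov_split[OF x] using that c1 by blast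
    then have "length C \<le> length (C1 @ x # D2)" using H by (auto simp: scov_def)
    then show ?thesis using C by simp
  qed
  ultimately show "\<exists>C1 C2. C = C1 @ x # C2 \<and> scov C1 X \<and> scov C2 Y"
    using C c1 c2 by (auto simp: scov_def)
next
  assume "\<exists>C1 C2. C = C1 @ x # C2 \<and> scov C1 X \<and> scov C2 Y"
  then obtain C1 C2 where C: "C = C1 @ x # C2" and c1: "scov C1 X" and c2: "scov C2 Y" by blast
  have cC: "cov C (X @ x # Y)" unfolding cov_split[OF x] using C c1 c2 by (auto simp: scov_def)
  have "length C \<le> length D" if dD: "cov D (X @ x # Y)" for D
  proof -
    obtain D1 D2 where "D = D1 @ x # D2" "cov D1 X" "cov D2 Y" using dD unfolding cov_split[OF x] by blast
    then show ?thesis using C c1 c2 unfolding scov_def by (simp add: add_mono)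
  qed
  then show "scov C (X @ x # Y)" using cC by (auto simp: scov_def)
qed

lemma card_scov_split:
  assumes x: "x \<notin> set X" "x \<notin> set Y"
  shows "card {C. scov C (X @ x # Y)} = card {C. scov C X} * card {C. scov C Y}"
proof -
  have eq: "{C. scov C (X @ x # Y)} = (\<lambda>(a, b). a @ x # b) ` ({C. scov C X} \<times> {C. scov C Y})"
    using scov_split[OF x] by fastforce
  have inj: "inj_on (\<lambda>(a, b). a @ x # b) ({C. scov C X} \<times> {C. scov C Y})"
  proof (rule inj_onI)
    fix p q assume p: "p \<in> {C. scov C X} \<times> {C. scov C Y}" and q: "q \<in> {C. scov C X} \<times> {C. scov C Y}"
      and e: "(case p of (a, b) \<Rightarrow> a @ x # b) = (case q of (a, b) \<Rightarrow> a @ x # b)"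
    obtain a b where ab: "p = (a, b)" by fastforce
    obtain c d where cd: "q = (c, d)" by fastforce
    have "set a \<subseteq> set X" "set b \<subseteq> set Y" using p ab cov_set by (auto simp: scov_def)
    then have "x \<notin> set a" "x \<notin> set b" using x by auto
    then have "a = c \<and> b = d" using e ab cd append_Cons_eq_iff[of x a b c d] by simp
    then show "p = q" using ab cd by simp
  qed
  show ?thesis unfolding eq card_image[OF inj] card_cartesian_product by simp
qed

lemma finite_scov: "finite {C. scov C S}"
proof (rule finite_subset)
  show "{C. scov C S} \<subseteq> {C. set C \<subseteq> set S \<and> length C \<le> length S}"
    using cov_set by (auto simp: scov_def cov_def dest: list_emb_length)
  show "finite {C. set C \<subseteq> set S \<and> length C \<le> length S}"
    by (rule finite_lists_length_le) simp
qed

lemma card_scov_pos: "1 \<le> card {C. scov C S}"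
proof -
  obtain C where "cov C S" "\<forall>D. cov D S \<longrightarrow> length C \<le> length D"
    using ex_has_least_nat[of "\<lambda>C. cov C S" S length] cov_self by blast
  then have "scov C S" by (simp add: scov_def)
  then have "{C. scov C S} \<noteq> {}" by blast
  then show ?thesis using finite_scov by (simp add: Suc_le_eq card_gt_0_iff)
qed

definition G :: "nat list" where "G = [0,0,1,0,1,2,0,2,1,0,1,0]"

lemma set_G: "set G = {0,1,2}" by (auto simp: G_def)

lemma chk_code: "chk C S \<longleftrightarrow> list_all (\<lambda>i. list_ex (\<lambda>t. C!t = S!i \<and> subseq (take t C) (take i S) \<and> subseq (drop (Suc t) C) (drop (Suc i) S)) [0..<length C]) [0..<length S]"
  by (simp add: chk_def list_all_iff list_ex_iff Ball_def Bex_def)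

lemma G_comp: "list_all (\<lambda>k. list_all (\<lambda>D. \<not> (list_all (\<lambda>i. list_ex (\<lambda>t. D!t = G!i \<and> subseq (take t D) (take i G) \<and> subseq (drop (Suc t) D) (drop (Suc i) G)) [0..<length D]) [0..<length G])) (List.n_lists k [0,1,2])) [0..<6]"
  unfolding G_def by code_simp

lemma G_lower: assumes "cov D G" shows "6 \<le> length D"
proof (rule ccontr)
  assume "\<not> 6 \<le> length D"
  then have k: "length D \<in> set [0..<6]" by simp
  have "set D \<subseteq> set [0,1,2::nat]" using cov_set[OF assms] unfolding set_G by simp
  then have "D \<in> set (List.n_lists (length D) [0,1,2])" by (simp add: set_n_lists)
  then have "\<not> chk D G" using G_comp k unfolding chk_code list_all_iff by blast
  then show False using assms by (simp add: cov_def)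
qed

lemma G_cov1: "cov [0,1,2,0,1,0] G"
  unfolding cov_def chk_code G_def by code_simp

lemma G_cov2: "cov [0,1,0,2,1,0] G"
  unfolding cov_def chk_code G_def by code_simp

lemma G_card: "2 \<le> card {C. scov C G}"
proof -
  have l: "length [0,1,2,0,1,0::nat] = 6" "length [0,1,0,2,1,0::nat] = 6" by simp_all
  have "scov [0,1,2,0,1,0] G" "scov [0,1,0,2,1,0] G"
    unfolding scov_def l using G_cov1 G_cov2 G_lower by blast+
  then have "{[0,1,2,0,1,0], [0,1,0,2,1,0]} \<subseteq> {C. scov C G}" by simp
  then have "card {[0,1,2,0,1,0], [0,1,0,2,1,0::nat]} \<le> card {C. scov C G}"
    using finite_scov by (rule card_mono[rotated])
  then show ?thesis by simp
qed



fun h :: "nat \<Rightarrow> nat" where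
"h q = (if q \<le> 1 then 0 else Suc (h (q - q div 2)))"

declare h.simps[simp del]

lemma h_mono: "a \<le> b \<Longrightarrow> h a \<le> h b"
proof (induction b arbitrary: a rule: less_induct)
  case (less b)
  show ?case
  proof (cases "a \<le> 1")
    case True then show ?thesis by (simp add: h.simps)
  next
    case False
    then have "b > 1" using less.prems by auto
    have "a - a div 2 \<le> b - b div 2" "b - b div 2 < b" using less.prems False by auto
    then have "h (a - a div 2) \<le> h (b - b div 2)" using less.IH by blast
    then show ?thesis using False \<open>b > 1\<close> by (simp add: h.simps)
  qed
qed

lemma h_bound: "2 \<le> q \<Longrightarrow> 2 ^ h q \<le> 2 * q - 2"
proof (induction q rule: less_induct)
  case (less q)
  define c where "c = q - q div 2"
  have hq: "h q = Suc (h c)" using less.prems by (simp add: h.simps c_def)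
  show ?case
  proof (cases "q = 2")
    case True then show ?thesis by (simp add: h.simps)
  next
    case False
    then have "2 \<le> c" "c < q" using less.prems by (auto simp: c_def)
    then have "2 ^ h c \<le> 2 * c - 2" using less.IH by blast
    moreover have "2 * c \<le> q + 1" by (simp add: c_def)
    ultimately show ?thesis using hq \<open>2 \<le> c\<close> by simp
  qed
qed

lemma h_bound2: "1 \<le> n \<Longrightarrow> 2 ^ h ((n + 1) div 16) \<le> n"
proof (cases "(n + 1) div 16 \<le> 1")
  case True
  assume "1 \<le> n"
  then show ?thesis using True by (simp add: h.simps)
next
  case False
  then have "2 ^ h ((n + 1) div 16) \<le> 2 * ((n + 1) div 16) - 2" by (intro h_bound) auto
  also have "\<dots> \<le> n" by linarith
  finally show ?thesis .
qed

function W :: "nat \<Rightarrow> nat list" where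
"W n = (if n \<le> 14 then replicate n 0
        else if n \<le> 30 then G @ 3 # replicate (n - 13) 0
        else W (16 * ((n + 1) div 32) - 1) @ (3 + h ((n + 1) div 16)) # W (n - 16 * ((n + 1) div 32)))"
  by auto
termination
proof (relation "measure id")
  fix n :: nat assume "\<not> n \<le> 14" "\<not> n \<le> 30"
  then show "(16 * ((n + 1) div 32) - 1, n) \<in> measure id" "(n - 16 * ((n + 1) div 32), n) \<in> measure id"
    by auto
qed auto

declare W.simps[simp del]

lemma split_facts:
  fixes n :: nat assumes "\<not> n \<le> 30"
  defines "m \<equiv> (n + 1) div 32" and "Q \<equiv> (n + 1) div 16"
  shows "1 \<le> m" "16 * m - 1 < n" "n - 16 * m < n" "(16 * m - 1) + 1 + (n - 16 * m) = n"
    "(16 * m - 1 + 1) div 16 = Q div 2" "2 \<le> Q"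
  using assms(1) unfolding m_def Q_def by auto

lemma split_facts2:
  fixes n :: nat assumes "\<not> n \<le> 30"
  shows "(n - 16 * ((n + 1) div 32) + 1) div 16 = (n + 1) div 16 - (n + 1) div 16 div 2"
proof -
  define Q where "Q = (n + 1) div 16"
  define r where "r = (n + 1) mod 16"
  have N: "n + 1 = 16 * Q + r" unfolding Q_def r_def by simp
  have r: "r < 16" unfolding r_def by simp
  have m: "(n + 1) div 32 = Q div 2" unfolding Q_def by (simp add: div_mult2_eq[symmetric])
  have "2 \<le> Q" using assms unfolding Q_def by auto
  then have "Q div 2 < Q" by auto
  then have e: "n - 16 * (Q div 2) + 1 = 16 * (Q - Q div 2) + r" using N by (simp add: diff_mult_distrib2)
  show ?thesis unfolding m e using r by (simp add: Q_def)
qed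

lemma W_props: "length (W n) = n \<and> set (W n) \<subseteq> {..< 4 + h ((n+1) div 16)} \<and> 2 ^ ((n+1) div 16) \<le> card {C. scov C (W n)}"
proof (induction n rule: less_induct)
  case (less n)
  show ?case
  proof (cases "n \<le> 14")
    case True
    then have W: "W n = replicate n 0" by (simp add: W.simps)
    have "(n + 1) div 16 = 0" using True by simp
    then show ?thesis unfolding W using card_scov_pos by auto
  next
    case F1: False
    show ?thesis
    proof (cases "n \<le> 30")
      case True
      then have W: "W n = G @ 3 # replicate (n - 13) 0" using F1 by (simp add: W.simps)
      have q: "(n + 1) div 16 = 1" using True F1 by simp
      have "3 \<notin> set G" "(3::nat) \<notin> set (replicate (n - 13) 0)" by (auto simp: set_G)
      then have "card {C. scov C (W n)} = card {C. scov C G} * card {C. scov C (replicate (n - 13) (0::nat))}"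
        unfolding W by (rule card_scov_split)
      moreover have "2 * 1 \<le> card {C. scov C G} * card {C. scov C (replicate (n - 13) (0::nat))}"
        using G_card card_scov_pos by (intro mult_mono) auto
      ultimately have "2 \<le> card {C. scov C (W n)}" by simp
      moreover have "length (W n) = n" using F1 by (simp add: W G_def)
      moreover have "set (W n) \<subseteq> {..< 4 + h ((n+1) div 16)}" unfolding W using set_G by auto
      ultimately show ?thesis using q by simp
    next
      case False
      define m where "m = (n + 1) div 32"
      define Q where "Q = (n + 1) div 16"
      define a where "a = 16 * m - 1"
      define b where "b = n - 16 * m"
      have sf: "1 \<le> m" "a < n" "b < n" "a + 1 + b = n" "(a + 1) div 16 = Q div 2" "2 \<le> Q"
        using split_facts[OF False] unfolding m_def Q_def a_def b_def by auto
      have sf2: "(b + 1) div 16 = Q - Q div 2" using split_facts2[OF False] unfolding b_def m_def Q_def .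
      have W: "W n = W a @ (3 + h Q) # W b" using F1 False by (simp add: W.simps a_def b_def m_def Q_def)
      have IHa: "length (W a) = a" "set (W a) \<subseteq> {..< 4 + h (Q div 2)}" "2 ^ (Q div 2) \<le> card {C. scov C (W a)}"
        using less.IH[OF sf(2)] sf(5) by auto
      have IHb: "length (W b) = b" "set (W b) \<subseteq> {..< 4 + h (Q - Q div 2)}" "2 ^ (Q - Q div 2) \<le> card {C. scov C (W b)}"
        using less.IH[OF sf(3)] sf2 by auto
      have hQ: "h Q = Suc (h (Q - Q div 2))" using sf(6) by (simp add: h.simps)
      have hm: "h (Q div 2) \<le> h (Q - Q div 2)" by (rule h_mono) auto
      have sa: "set (W a) \<subseteq> {..< 3 + h Q}" using IHa(2) hQ hm by auto
      have sb: "set (W b) \<subseteq> {..< 3 + h Q}" using IHb(2) hQ by auto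
      have na: "3 + h Q \<notin> set (W a)" and nb: "3 + h Q \<notin> set (W b)" using sa sb by auto
      have "card {C. scov C (W n)} = card {C. scov C (W a)} * card {C. scov C (W b)}"
        unfolding W by (rule card_scov_split[OF na nb])
      moreover have "2 ^ (Q div 2) * 2 ^ (Q - Q div 2) \<le> card {C. scov C (W a)} * card {C. scov C (W b)}"
        using IHa(3) IHb(3) by (rule mult_mono) auto
      moreover have "(2::nat) ^ (Q div 2) * 2 ^ (Q - Q div 2) = 2 ^ Q"
        by (simp add: power_add[symmetric])
      ultimately have "2 ^ Q \<le> card {C. scov C (W n)}" by simp
      moreover have "length (W n) = n" unfolding W using IHa(1) IHb(1) sf(4) by simp
      moreover have "set (W n) \<subseteq> {..< 4 + h Q}" unfolding W using sa sb by auto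
      ultimately show ?thesis unfolding Q_def by simp
    qed
  qed
qed


lemma k_bigo: "(\<lambda>n. real (4 + h ((n + 1) div 16))) \<in> O(\<lambda>n. ln (real n))"
proof (rule bigoI[where c = "4 + 1 / ln 2"])
  show "\<forall>\<^sub>F n in at_top. norm (real (4 + h ((n + 1) div 16))) \<le> (4 + 1 / ln 2) * norm (ln (real n))"
    using eventually_ge_at_top[of "3::nat"]
  proof eventually_elim
    case (elim n)
    let ?h = "h ((n + 1) div 16)"
    have n0: "(0::real) < real n" using elim by simp
    have "(2::nat) ^ ?h \<le> n" using h_bound2 elim by simp
    then have "(2::real) ^ ?h \<le> real n" by (metis of_nat_le_iff of_nat_numeral of_nat_power)
    then have "ln ((2::real) ^ ?h) \<le> ln (real n)" using n0 by simp
    then have hl: "real ?h * ln 2 \<le> ln (real n)" by (simp add: ln_realpow)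
    have l2: "ln (2::real) > 0" by simp
    have hl2: "real ?h \<le> ln (real n) / ln 2" using hl l2 by (simp add: pos_le_divide_eq)
    have "exp 1 \<le> real n" using exp_le elim by (meson dual_order.trans numeral_le_real_of_nat_iff)
    then have ln1: "1 \<le> ln (real n)" using n0 by (simp add: ln_ge_iff)
    have "real (4 + ?h) \<le> 4 * ln (real n) + ln (real n) / ln 2" using hl2 ln1 by simp
    also have "\<dots> = (4 + 1 / ln 2) * ln (real n)" by (simp add: algebra_simps)
    finally show ?case using ln1 by simp
  qed
qed

theorem mainTheorem17:
  shows "\<exists>k :: nat \<Rightarrow> nat. (\<lambda>n. real (k n)) \<in> O(\<lambda>n. ln (real n)) \<and>
    (\<forall>n :: nat. n \<ge> 1 \<longrightarrow>
      (\<exists>w :: nat list. length w = n \<and> set w \<subseteq> {..<k n} \<and>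
         card {C. shortest_s_cover C w} \<ge> 2 ^ ((n + 1) div 16)))"
proof (intro exI[of _ "\<lambda>n. 4 + h ((n + 1) div 16)"] conjI allI impI)
  show "(\<lambda>n. real (4 + h ((n + 1) div 16))) \<in> O(\<lambda>n. ln (real n))" by (rule k_bigo)
next
  fix n :: nat assume n: "n \<ge> 1"
  have P: "length (W n) = n" "set (W n) \<subseteq> {..< 4 + h ((n+1) div 16)}" "2 ^ ((n+1) div 16) \<le> card {C. scov C (W n)}"
    using W_props by auto
  have ne: "W n \<noteq> []" using P(1) n by auto
  have "{C. shortest_s_cover C (W n)} = {C. scov C (W n)}" using shortest_scov[OF ne] by simp
  then show "\<exists>w. length w = n \<and> set w \<subseteq> {..<4 + h ((n + 1) div 16)} \<and> 2 ^ ((n + 1) div 16) \<le> card {C. shortest_s_cover C w}"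
    using P by (intro exI[of _ "W n"]) auto
qed

end
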